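(* Let $\Lambda=(\mathcal{L}\subset\mathbb{R}^s,\mathbb{R}^n)$ be a generic cut-and-project scheme with associated matrix $L$ and self-similarity $A\in\mathbb{R}^{n\times n}$, and let $B\in\mathbb{R}^{(s-n)\times(s-n)}$, $C\in\mathbb{Z}^{s\times s}$ satisfy $\begin{pmatrix}A&O\\O&B\end{pmatrix}L=LC$. Then each eigenvalue of $A$ is an algebraic conjugate of an eigenvalue of $B$, and each eigenvalue of $B$ is an algebraic conjugate of an eigenvalue of $A$.
   Context: Two algebraic numbers are algebraic conjugates if they have the same minimal polynomial over $\mathbb{Q}$. A lattice $\mathcal{L}\subset\mathbb{R}^s$ is $\{L\mathbf{r}:\mathbf{r}\in\mathbb{Z}^s\}$ for a non-singular $L\in\mathbb{R}^{s\times s}$. For $1\le n<s$ the scheme $(\mathcal{L}\subset\mathbb{R}^s,\mathbb{R}^n)$ has projections $\pi_\parallel(\mathbf{x})=(x_1,\dots,x_n)^\top$, $\pi_\perp(\mathbf{x})=(x_{n+1},\dots,x_s)^\top$; it is generic if $\pi_\parallel|_{\mathcal{L}}$, $\pi_\perp|_{\mathcal{L}}$ are injective and $\pi_\perp(\mathcal{L})$ is dense in $\mathbb{R}^{s-n}$. $A$ is a self-similarity of a generic scheme if $A\pi_\parallel(\mathcal{L})\subset\pi_\parallel(\mathcal{L})$ and there exist $C\in\mathbb{Z}^{s\times s}$, $B$ real with $\begin{pmatrix}A&O\\O&B\end{pmatrix}L=LC$. *)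

theory Defs
  imports "Jordan_Normal_Form.Jordan_Normal_Form"
begin

definition lattice_of :: "nat \<Rightarrow> real mat \<Rightarrow> real vec set" where
  "lattice_of s L = {L *\<^sub>v r | r. r \<in> carrier_vec s \<and> (\<forall>i<s. r $ i \<in> \<int>)}"

definition pi_par :: "nat \<Rightarrow> real vec \<Rightarrow> real vec" where
  "pi_par n x = vec n (\<lambda>i. x $ i)"

definition pi_perp :: "nat \<Rightarrow> nat \<Rightarrow> real vec \<Rightarrow> real vec" where
  "pi_perp s n x = vec (s - n) (\<lambda>i. x $ (n + i))"

text \<open>Generic cut-and-project scheme with associated matrix L.  Density of the projection
  in R^(s-n) is written out with the (equivalent) sup-norm balls.\<close>
definition generic_cps :: "nat \<Rightarrow> nat \<Rightarrow> real mat \<Rightarrow> bool" where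
  "generic_cps s n L \<longleftrightarrow>
     1 \<le> n \<and> n < s \<and> L \<in> carrier_mat s s \<and> det L \<noteq> 0 \<and>
     inj_on (pi_par n) (lattice_of s L) \<and>
     inj_on (pi_perp s n) (lattice_of s L) \<and>
     (\<forall>y \<in> carrier_vec (s - n). \<forall>e > 0. \<exists>x \<in> lattice_of s L.
        \<forall>i < s - n. \<bar>pi_perp s n x $ i - y $ i\<bar> < e)"

definition self_similarity :: "nat \<Rightarrow> nat \<Rightarrow> real mat \<Rightarrow> real mat \<Rightarrow> bool" where
  "self_similarity s n L A \<longleftrightarrow>
     A \<in> carrier_mat n n \<and>
     (\<lambda>v. A *\<^sub>v v) ` (pi_par n ` lattice_of s L) \<subseteq> pi_par n ` lattice_of s L \<and>
     (\<exists>(C :: int mat) (B :: real mat). C \<in> carrier_mat s s \<and> B \<in> carrier_mat (s - n) (s - n) \<and>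
        four_block_mat A (0\<^sub>m n (s - n)) (0\<^sub>m (s - n) n) B * L = L * map_mat real_of_int C)"

text \<open>Minimal polynomial over Q of a complex number (meaningful for algebraic numbers).\<close>
definition min_poly_Q :: "complex \<Rightarrow> rat poly" where
  "min_poly_Q x = (THE p. monic p \<and> poly (map_poly of_rat p) x = 0 \<and>
      (\<forall>q. q \<noteq> 0 \<and> poly (map_poly of_rat q) x = 0 \<longrightarrow> degree p \<le> degree q))"

definition alg_conjugate :: "complex \<Rightarrow> complex \<Rightarrow> bool" where
  "alg_conjugate x y \<longleftrightarrow> algebraic x \<and> algebraic y \<and> min_poly_Q x = min_poly_Q y"

end

theory Submission
  imports Defs
begin



definition evm :: "nat \<Rightarrow> 'a::comm_ring_1 poly \<Rightarrow> 'a mat \<Rightarrow> 'a mat" where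
  "evm n p X = fold_coeffs (\<lambda>a M. a \<cdot>\<^sub>m 1\<^sub>m n + X * M) p (0\<^sub>m n n)"

lemma evm_0[simp]: "evm n 0 X = 0\<^sub>m n n" by (simp add: evm_def)

lemma evm_pCons: assumes X: "X \<in> carrier_mat n n"
  shows "evm n (pCons a p) X = a \<cdot>\<^sub>m 1\<^sub>m n + X * evm n p X"
proof (cases "p = 0 \<and> a = 0")
  case True
  then show ?thesis using X by (auto simp: evm_def)
next
  case False
  then show ?thesis by (auto simp: evm_def fold_coeffs_pCons_not_0_0_eq)
qed

lemma evm_carrier[simp]: assumes X: "X \<in> carrier_mat n n"
  shows "evm n p X \<in> carrier_mat n n"
  by (induct p rule: pCons_induct, insert X, auto simp: evm_pCons)

lemma evm_dims[simp]: assumes X: "X \<in> carrier_mat n n"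
  shows "dim_row (evm n p X) = n" "dim_col (evm n p X) = n"
  using evm_carrier[OF X, of p] by auto

lemma smult_one_mat_vec: "v \<in> carrier_vec n \<Longrightarrow> (a \<cdot>\<^sub>m 1\<^sub>m n) *\<^sub>v v = (a::'a::comm_ring_1) \<cdot>\<^sub>v v"
proof -
  assume v: "v \<in> carrier_vec n"
  have "(a \<cdot>\<^sub>m 1\<^sub>m n) *\<^sub>v v = a \<cdot>\<^sub>v (1\<^sub>m n *\<^sub>v v)"
    by (rule eq_vecI, insert v, auto simp: scalar_prod_def sum_distrib_left ac_simps if_distrib[of "(*) _"] cong: if_cong)
  then show ?thesis using v by simp
qed

lemma evm_add: assumes X: "X \<in> carrier_mat n n"
  shows "evm n (p + q) X = evm n p X + evm n q X"
proof (induct p q rule: poly_induct2)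
  case 0
  then show ?case using X by simp
next
  case (pCons a p b q)
  have "evm n (pCons a p + pCons b q) X = evm n (pCons (a+b) (p+q)) X" by simp
  also have "\<dots> = (a+b) \<cdot>\<^sub>m 1\<^sub>m n + X * (evm n p X + evm n q X)" using X pCons by (simp add: evm_pCons)
  also have "\<dots> = (a \<cdot>\<^sub>m 1\<^sub>m n + X * evm n p X) + (b \<cdot>\<^sub>m 1\<^sub>m n + X * evm n q X)"
    using X by (simp add: mult_add_distrib_mat[OF X evm_carrier[OF X] evm_carrier[OF X]], intro eq_matI, auto simp: algebra_simps)
  finally show ?case using X by (simp add: evm_pCons)
qed

lemma evm_smult: assumes X: "X \<in> carrier_mat n n"
  shows "evm n (Polynomial.smult c p) X = c \<cdot>\<^sub>m evm n p X"
proof (induct p rule: pCons_induct)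
  case 0
  then show ?case by simp
next
  case (pCons a p)
  have "evm n (Polynomial.smult c (pCons a p)) X = evm n (pCons (c*a) (Polynomial.smult c p)) X" by simp
  also have "\<dots> = (c*a) \<cdot>\<^sub>m 1\<^sub>m n + X * (c \<cdot>\<^sub>m evm n p X)" using X pCons by (simp add: evm_pCons)
  also have "\<dots> = c \<cdot>\<^sub>m (a \<cdot>\<^sub>m 1\<^sub>m n + X * evm n p X)"
    using X by (simp add: mult_smult_distrib[OF X evm_carrier[OF X]], intro eq_matI, auto simp: algebra_simps)
  finally show ?case using X by (simp add: evm_pCons)
qed

lemma evm_mult: assumes X: "X \<in> carrier_mat n n"
  shows "evm n (p * q) X = evm n p X * evm n q X"
proof (induct p rule: pCons_induct)
  case 0
  then show ?case using X by (simp add: left_mult_zero_mat[of _ n n])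
next
  case (pCons a p)
  have "evm n (pCons a p * q) X = evm n (Polynomial.smult a q + pCons 0 (p * q)) X" by simp
  also have "\<dots> = a \<cdot>\<^sub>m evm n q X + X * (evm n p X * evm n q X)"
    using X pCons by (simp add: evm_add evm_smult evm_pCons, intro eq_matI, auto)
  also have "\<dots> = (a \<cdot>\<^sub>m 1\<^sub>m n + X * evm n p X) * evm n q X"
    using X by (simp add: add_mult_distrib_mat[of "a \<cdot>\<^sub>m 1\<^sub>m n" n n "X * evm n p X" "evm n q X" n] assoc_mult_mat[OF X evm_carrier[OF X] evm_carrier[OF X]], intro eq_matI, auto)
  finally show ?case using X by (simp add: evm_pCons)
qed

lemma evm_lin: assumes X: "X \<in> carrier_mat n n"
  shows "evm n [:- r, 1:] X = X + (- r) \<cdot>\<^sub>m 1\<^sub>m n"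
  using X by (simp add: evm_pCons, intro eq_matI, auto)

lemma evm_eigen: fixes X :: "'a::field mat" assumes X: "X \<in> carrier_mat n n" and v: "v \<in> carrier_vec n"
  and ev: "X *\<^sub>v v = k \<cdot>\<^sub>v v"
  shows "evm n p X *\<^sub>v v = poly p k \<cdot>\<^sub>v v"
proof (induct p rule: pCons_induct)
  case 0
  then show ?case using v by auto
next
  case (pCons a p)
  have "evm n (pCons a p) X *\<^sub>v v = (a \<cdot>\<^sub>m 1\<^sub>m n) *\<^sub>v v + X *\<^sub>v (evm n p X *\<^sub>v v)"
    using X v by (simp add: evm_pCons add_mult_distrib_mat_vec[of _ n n] assoc_mult_mat_vec[of _ n n _ n])
  also have "\<dots> = a \<cdot>\<^sub>v v + X *\<^sub>v (poly p k \<cdot>\<^sub>v v)" using pCons v by (simp add: smult_one_mat_vec)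
  also have "\<dots> = a \<cdot>\<^sub>v v + poly p k \<cdot>\<^sub>v (k \<cdot>\<^sub>v v)" using X v ev by (simp add: mult_mat_vec)
  also have "\<dots> = poly (pCons a p) k \<cdot>\<^sub>v v"
    by (rule eq_vecI, insert v, auto simp: algebra_simps)
  finally show ?case .
qed




lemma (in comm_ring_hom) evm_hom: assumes X: "X \<in> carrier_mat n n"
  shows "mat\<^sub>h (evm n p X) = evm n (map_poly hom p) (mat\<^sub>h X)"
proof (induct p rule: pCons_induct)
  case 0
  then show ?case by (simp add: evm_def, intro eq_matI, auto)
next
  case (pCons a p)
  have X': "mat\<^sub>h X \<in> carrier_mat n n" using X by simp
  have "mat\<^sub>h (evm n (pCons a p) X) = mat\<^sub>h (a \<cdot>\<^sub>m 1\<^sub>m n) + mat\<^sub>h X * mat\<^sub>h (evm n p X)"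
  proof -
    have "mat\<^sub>h (evm n (pCons a p) X) = mat\<^sub>h (a \<cdot>\<^sub>m 1\<^sub>m n) + mat\<^sub>h (X * evm n p X)"
      using X by (simp add: evm_pCons, intro eq_matI, auto simp: hom_add)
    then show ?thesis using mat_hom_mult[OF X evm_carrier[OF X]] by simp
  qed
  also have "\<dots> = hom a \<cdot>\<^sub>m 1\<^sub>m n + mat\<^sub>h X * evm n (map_poly hom p) (mat\<^sub>h X)"
    using pCons X by (simp, intro eq_matI, auto)
  also have "\<dots> = evm n (map_poly hom (pCons a p)) (mat\<^sub>h X)"
    using X' by (simp add: evm_pCons Polynomial.map_poly_pCons[of hom, OF hom_zero])
  finally show ?case .
qed

lemma evm_intertwine: assumes M: "M \<in> carrier_mat n n" and L: "L \<in> carrier_mat n n"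
  and C: "C \<in> carrier_mat n n" and hML: "M * L = L * C"
  shows "evm n p M * L = L * evm n p C"
proof (induct p rule: pCons_induct)
  case 0
  then show ?case using L by simp
next
  case (pCons a p)
  let ?E = "evm n p M" and ?F = "evm n p C"
  have E: "?E \<in> carrier_mat n n" and F: "?F \<in> carrier_mat n n" using M C by auto
  have "evm n (pCons a p) M * L = (a \<cdot>\<^sub>m 1\<^sub>m n) * L + M * ?E * L"
    using M E L by (simp add: evm_pCons add_mult_distrib_mat[of _ n n _ _ n])
  also have "M * ?E * L = M * (?E * L)" using assoc_mult_mat[OF M E L] .
  also have "\<dots> = M * (L * ?F)" using pCons by simp
  also have "\<dots> = (M * L) * ?F" using M L F by simp
  also have "\<dots> = L * (C * ?F)" using assoc_mult_mat[OF L C F] hML by simp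
  also have "(a \<cdot>\<^sub>m 1\<^sub>m n) * L = L * (a \<cdot>\<^sub>m 1\<^sub>m n)"
    using L by (simp add: mult_smult_assoc_mat[OF one_carrier_mat L] mult_smult_distrib[OF L one_carrier_mat])
  also have "L * (a \<cdot>\<^sub>m 1\<^sub>m n) + L * (C * ?F) = L * evm n (pCons a p) C"
    using L C F by (simp add: evm_pCons mult_add_distrib_mat[of _ n n _ n])
  finally show ?case .
qed

lemma evm_block: assumes A: "A \<in> carrier_mat n n" and B: "B \<in> carrier_mat m m"
  shows "evm (n+m) p (four_block_mat A (0\<^sub>m n m) (0\<^sub>m m n) B) =
    four_block_mat (evm n p A) (0\<^sub>m n m) (0\<^sub>m m n) (evm m p B)"
proof (induct p rule: pCons_induct)
  case 0
  then show ?case by simp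
next
  case (pCons a p)
  let ?E = "evm n p A" and ?F = "evm m p B"
  have E: "?E \<in> carrier_mat n n" and F: "?F \<in> carrier_mat m m" using A B by auto
  have FB: "four_block_mat A (0\<^sub>m n m) (0\<^sub>m m n) B \<in> carrier_mat (n+m) (n+m)" using A B by auto
  have "evm (n+m) (pCons a p) (four_block_mat A (0\<^sub>m n m) (0\<^sub>m m n) B) =
    a \<cdot>\<^sub>m four_block_mat (1\<^sub>m n) (0\<^sub>m n m) (0\<^sub>m m n) (1\<^sub>m m) +
    four_block_mat A (0\<^sub>m n m) (0\<^sub>m m n) B * four_block_mat ?E (0\<^sub>m n m) (0\<^sub>m m n) ?F"
    using FB pCons by (simp add: evm_pCons)
  also have "\<dots> = four_block_mat (a \<cdot>\<^sub>m 1\<^sub>m n + A * ?E) (0\<^sub>m n m) (0\<^sub>m m n) (a \<cdot>\<^sub>m 1\<^sub>m m + B * ?F)"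
    using A B E F
    by (simp del: four_block_one_mat add: smult_four_block_mat[of _ n n _ m _ m] mult_four_block_mat[OF A zero_carrier_mat zero_carrier_mat B E zero_carrier_mat zero_carrier_mat F]
        add_four_block_mat[of _ n n _ m _ m])
  also have "\<dots> = four_block_mat (evm n (pCons a p) A) (0\<^sub>m n m) (0\<^sub>m m n) (evm m (pCons a p) B)"
    using A B by (simp add: evm_pCons)
  finally show ?case .
qed




lemma mpr_mult: "map_poly (of_rat::rat\<Rightarrow>complex) (p*q) = map_poly of_rat p * map_poly of_rat q"
proof - interpret map_poly_comm_ring_hom "of_rat::rat\<Rightarrow>complex" .. show ?thesis by (rule hom_mult) qed
lemma mpr_diff: "map_poly (of_rat::rat\<Rightarrow>complex) (p-q) = map_poly of_rat p - map_poly of_rat q"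
proof - interpret map_poly_comm_ring_hom "of_rat::rat\<Rightarrow>complex" .. show ?thesis by (rule hom_minus) qed

definition mp_prop :: "complex \<Rightarrow> rat poly \<Rightarrow> bool" where
  "mp_prop x p \<longleftrightarrow> monic p \<and> poly (map_poly of_rat p) x = 0 \<and>
      (\<forall>q. q \<noteq> 0 \<and> poly (map_poly of_rat q) x = 0 \<longrightarrow> degree p \<le> degree q)"

lemma monic_nz: "monic (p::rat poly) \<Longrightarrow> p \<noteq> 0" by auto

lemma mp_unique: assumes 1: "mp_prop x p1" and 2: "mp_prop x p2" shows "p1 = p2"
proof (rule ccontr)
  assume ne: "p1 \<noteq> p2"
  have m1: "monic p1" and m2: "monic p2" using 1 2 unfolding mp_prop_def by auto
  have deq: "degree p1 = degree p2" using 1 2 monic_nz[OF m1] monic_nz[OF m2]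
    unfolding mp_prop_def by (meson antisym)
  let ?r = "p1 - p2"
  have rnz: "?r \<noteq> 0" using ne by simp
  have root: "poly (map_poly of_rat ?r) x = 0" using 1 2 unfolding mp_prop_def mpr_diff by simp
  have "degree ?r < degree p1"
  proof (rule degree_less_if_less_eqI)
    show "degree ?r \<le> degree p1" using deq by (simp add: degree_diff_le)
    show "coeff ?r (degree p1) = 0" using m1 m2 deq by simp
  qed (rule rnz)
  moreover have "degree p1 \<le> degree ?r" using 1 rnz root unfolding mp_prop_def by blast
  ultimately show False by simp
qed

lemma min_poly_eq: "mp_prop x p \<Longrightarrow> min_poly_Q x = p"
  unfolding min_poly_Q_def mp_prop_def[symmetric]
  by (rule the_equality, assumption, rule mp_unique[symmetric])

lemma mp_exists: assumes "\<exists>q::rat poly. q \<noteq> 0 \<and> poly (map_poly of_rat q) x = 0"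
  shows "\<exists>p. mp_prop x p"
proof -
  let ?P = "\<lambda>d. \<exists>q::rat poly. q \<noteq> 0 \<and> poly (map_poly of_rat q) x = 0 \<and> degree q = d"
  from assms have ex: "\<exists>d. ?P d" by blast
  define d where "d = (LEAST d. ?P d)"
  from LeastI_ex[OF ex] obtain q where q: "q \<noteq> 0" "poly (map_poly of_rat q) x = 0" "degree q = d"
    unfolding d_def by blast
  have min: "\<And>q'. q' \<noteq> 0 \<Longrightarrow> poly (map_poly of_rat q') x = 0 \<Longrightarrow> d \<le> degree q'"
    unfolding d_def by (rule Least_le, blast)
  define p where "p = Polynomial.smult (inverse (lead_coeff q)) q"
  have lc: "lead_coeff q \<noteq> 0" using q(1) by simp
  have "monic p" unfolding p_def using lc by simp
  moreover have "poly (map_poly of_rat p) x = 0" unfolding p_def of_rat_hom.map_poly_hom_smult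
    using q by simp
  moreover have "degree p = d" unfolding p_def using lc q by simp
  ultimately show ?thesis unfolding mp_prop_def using min by metis
qed

lemma mp_dvd: assumes m: "mp_prop x m" and q: "q \<noteq> 0" "poly (map_poly of_rat q) x = 0"
  shows "m dvd q"
proof -
  have mnz: "m \<noteq> 0" using m unfolding mp_prop_def by auto
  let ?r = "q mod m"
  have "q = (q div m) * m + ?r" by simp
  then have "map_poly (of_rat::rat\<Rightarrow>complex) q = map_poly of_rat (q div m) * map_poly of_rat m + map_poly of_rat ?r"
    by (metis mpr_mult of_rat_hom.map_poly_hom_add)
  then have root: "poly (map_poly of_rat ?r) x = 0" using m q unfolding mp_prop_def
    by (metis add_0 mult_zero_right poly_add poly_mult)
  show ?thesis
  proof (rule ccontr)
    assume "\<not> m dvd q"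
    then have rnz: "?r \<noteq> 0" by (simp add: mod_eq_0_iff_dvd)
    then have "degree ?r < degree m" using mnz degree_mod_less by blast
    moreover have "degree m \<le> degree ?r" using m rnz root unfolding mp_prop_def by blast
    ultimately show False by simp
  qed
qed

lemma mp_conj: assumes mx: "mp_prop x m" and my: "mp_prop y m'"
  and root: "poly (map_poly of_rat m) y = 0"
  shows "m' = m"
proof -
  have mnz: "m \<noteq> 0" and m'nz: "m' \<noteq> 0" using mx my unfolding mp_prop_def by auto
  have "m' dvd m" by (rule mp_dvd[OF my mnz root])
  then obtain k where k: "m = m' * k" by (elim dvdE)
  have knz: "k \<noteq> 0" using k mnz by auto
  have "degree m' \<noteq> 0"
  proof
    assume "degree m' = 0"
    then have "m' = 1" using my unfolding mp_prop_def by (metis monic_degree_0)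
    then show False using my unfolding mp_prop_def by simp
  qed
  have dk: "degree m = degree m' + degree k" using k m'nz knz by (simp add: degree_mult_eq)
  have "poly (map_poly of_rat m') x * poly (map_poly of_rat k) x = 0"
    using mx k unfolding mp_prop_def by (metis mpr_mult poly_mult)
  moreover have "poly (map_poly of_rat k) x \<noteq> 0"
  proof
    assume "poly (map_poly of_rat k) x = 0"
    then have "degree m \<le> degree k" using mx knz unfolding mp_prop_def by blast
    then show False using dk \<open>degree m' \<noteq> 0\<close> by simp
  qed
  ultimately have r': "poly (map_poly of_rat m') x = 0" by simp
  have "mp_prop x m'"
  proof -
    have "degree m' \<le> degree m" using my mnz root unfolding mp_prop_def by blast
    moreover have "degree m \<le> degree m'" using mx m'nz r' unfolding mp_prop_def by blast
    ultimately show ?thesis using mx my r' unfolding mp_prop_def by auto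
  qed
  then show ?thesis using mp_unique[OF mx] by simp
qed




lemma smult_mat_vec_assoc: "A \<in> carrier_mat nr nc \<Longrightarrow> v \<in> carrier_vec nc \<Longrightarrow>
  (c \<cdot>\<^sub>m A) *\<^sub>v v = (c::'a::comm_ring_1) \<cdot>\<^sub>v (A *\<^sub>v v)"
  by (rule eq_vecI, auto simp: scalar_prod_def sum_distrib_left ac_simps)

lemma evm_one: "X \<in> carrier_mat n n \<Longrightarrow> evm n 1 X = 1\<^sub>m n"
  by (simp add: one_pCons evm_pCons del: pCons_one, intro eq_matI, auto)

lemma roots_eigen_list:
  fixes X :: "complex mat"
  assumes X: "X \<in> carrier_mat n n"
  shows "y \<in> carrier_vec n \<Longrightarrow> y \<noteq> 0\<^sub>v n \<Longrightarrow> evm n (\<Prod>a\<leftarrow>as. [:- a, 1:]) X *\<^sub>v y = 0\<^sub>v n \<Longrightarrow>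
    \<exists>r. poly (\<Prod>a\<leftarrow>as. [:- a, 1:]) r = 0 \<and> eigenvalue X r"
proof (induct as arbitrary: y)
  case Nil
  then show ?case using X by (simp add: evm_one)
next
  case (Cons a as)
  let ?Q = "\<Prod>a\<leftarrow>as. [:- a, 1:]"
  let ?z = "evm n ?Q X *\<^sub>v y"
  have z: "?z \<in> carrier_vec n" using mult_mat_vec_carrier[OF evm_carrier[OF X] Cons(2)] .
  show ?case
  proof (cases "?z = 0\<^sub>v n")
    case True
    from Cons(1)[OF Cons(2,3) True] obtain r where "poly ?Q r = 0" "eigenvalue X r" by blast
    then show ?thesis by (intro exI[of _ r], simp)
  next
    case False
    have "evm n (\<Prod>a\<leftarrow>a#as. [:- a, 1:]) X = evm n ([:- a, 1:] * ?Q) X" by simp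
    also have "\<dots> = evm n [:- a, 1:] X * evm n ?Q X" by (rule evm_mult[OF X])
    also have "\<dots> = (X + (- a) \<cdot>\<^sub>m 1\<^sub>m n) * evm n ?Q X" by (simp only: evm_lin[OF X])
    finally have "evm n (\<Prod>a\<leftarrow>a#as. [:- a, 1:]) X = (X + (- a) \<cdot>\<^sub>m 1\<^sub>m n) * evm n ?Q X" .
    then have "0\<^sub>v n = ((X + (- a) \<cdot>\<^sub>m 1\<^sub>m n) * evm n ?Q X) *\<^sub>v y"
      using Cons(4) by simp
    also have "\<dots> = (X + (- a) \<cdot>\<^sub>m 1\<^sub>m n) *\<^sub>v ?z"
      by (rule assoc_mult_mat_vec[of _ n n _ n], insert X Cons(2), auto)
    also have "\<dots> = X *\<^sub>v ?z + (- a) \<cdot>\<^sub>v ?z"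
      using X z by (simp add: add_mult_distrib_mat_vec[of _ n n] smult_one_mat_vec)
    finally have eq: "0\<^sub>v n = X *\<^sub>v ?z + (- a) \<cdot>\<^sub>v ?z" .
    have "X *\<^sub>v ?z = a \<cdot>\<^sub>v ?z"
    proof (rule eq_vecI)
      fix i assume i: "i < dim_vec (a \<cdot>\<^sub>v ?z)"
      then have i': "i < n" using z X by simp
      from arg_cong[OF eq, of "\<lambda>v. v $ i"] have "0 = (X *\<^sub>v ?z) $ i + (- a) * ?z $ i"
        using i' X z by (simp add: carrier_vecD)
      then show "(X *\<^sub>v ?z) $ i = (a \<cdot>\<^sub>v ?z) $ i" using i' z X by (simp add: algebra_simps)
    qed (insert X z, auto)
    then have "eigenvector X ?z a" unfolding eigenvector_def using X z False by auto
    then have "eigenvalue X a" unfolding eigenvalue_def by blast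
    then show ?thesis by (intro exI[of _ a], simp)
  qed
qed

lemma roots_eigen:
  fixes X :: "complex mat"
  assumes X: "X \<in> carrier_mat n n" and P: "P \<noteq> 0" and y: "y \<in> carrier_vec n" "y \<noteq> 0\<^sub>v n"
    and ev: "evm n P X *\<^sub>v y = 0\<^sub>v n"
  shows "\<exists>r. poly P r = 0 \<and> eigenvalue X r"
proof -
  define c where "c = lead_coeff P"
  obtain as where as: "Polynomial.smult c (\<Prod>a\<leftarrow>as. [:- a, 1:]) = P"
    using fundamental_theorem_algebra_factorized[of P] unfolding c_def by blast
  let ?Q = "\<Prod>a\<leftarrow>as. [:- a, 1:]"
  have c: "c \<noteq> 0" using P unfolding c_def by simp
  have "0\<^sub>v n = c \<cdot>\<^sub>v (evm n ?Q X *\<^sub>v y)"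
    using ev X y unfolding as[symmetric] by (simp add: evm_smult smult_mat_vec_assoc[of _ n n])
  then have eq: "0\<^sub>v n = c \<cdot>\<^sub>v (evm n ?Q X *\<^sub>v y)" .
  have w: "evm n ?Q X *\<^sub>v y \<in> carrier_vec n" using mult_mat_vec_carrier[OF evm_carrier[OF X] y(1)] .
  have "evm n ?Q X *\<^sub>v y = 0\<^sub>v n"
  proof (rule eq_vecI)
    fix i assume i: "i < dim_vec (0\<^sub>v n :: complex vec)"
    then have i': "i < n" by simp
    from arg_cong[OF eq, of "\<lambda>v. v $ i"] have "0 = c * (evm n ?Q X *\<^sub>v y) $ i"
      using i' w X by (simp add: carrier_vecD)
    then show "(evm n ?Q X *\<^sub>v y) $ i = 0\<^sub>v n $ i" using i' c by simp
  qed (insert w X, auto)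
  from roots_eigen_list[OF X y this] obtain r where "poly ?Q r = 0" "eigenvalue X r" by blast
  then show ?thesis by (intro exI[of _ r], subst as[symmetric], simp)
qed




lemma clear_denom:
  fixes v :: "nat \<Rightarrow> rat"
  assumes "finite I" "i \<in> I"
  shows "rat_of_int (\<Prod>j\<in>I. snd (quotient_of (v j))) * v i \<in> \<int>"
proof -
  obtain a b where ab: "quotient_of (v i) = (a, b)" by force
  have b: "b > 0" using quotient_of_denom_pos[OF ab] .
  have vi: "v i = rat_of_int a / rat_of_int b" using quotient_of_div[OF ab] .
  have "(\<Prod>j\<in>I. snd (quotient_of (v j))) = b * (\<Prod>j\<in>I-{i}. snd (quotient_of (v j)))"
    using prod.remove[OF assms, of "\<lambda>j. snd (quotient_of (v j))"] ab by simp
  then have "rat_of_int (\<Prod>j\<in>I. snd (quotient_of (v j))) * v i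
     = rat_of_int (a * (\<Prod>j\<in>I-{i}. snd (quotient_of (v j))))"
    using b vi by (simp add: field_simps)
  then show ?thesis by (metis Ints_of_int)
qed

lemma int_kernel:
  fixes Q :: "rat mat"
  assumes Q: "Q \<in> carrier_mat s s" and d: "det Q = 0"
  shows "\<exists>r \<in> carrier_vec s. r \<noteq> 0\<^sub>v s \<and> Q *\<^sub>v r = 0\<^sub>v s \<and> (\<forall>i<s. r $ i \<in> \<int>)"
proof -
  obtain v where v: "v \<in> carrier_vec s" "v \<noteq> 0\<^sub>v s" "Q *\<^sub>v v = 0\<^sub>v s"
    using det_0_iff_vec_prod_zero[OF Q] d by blast
  define D where "D = (\<Prod>j\<in>{0..<s}. snd (quotient_of (v $ j)))"
  have "D > 0" unfolding D_def by (rule prod_pos) (simp add: quotient_of_denom_pos')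
  then have Dpos: "D \<noteq> 0" by simp
  define r where "r = rat_of_int D \<cdot>\<^sub>v v"
  have r: "r \<in> carrier_vec s" unfolding r_def using v by simp
  have "r \<noteq> 0\<^sub>v s"
  proof
    assume "r = 0\<^sub>v s"
    then have "\<forall>i<s. rat_of_int D * v $ i = 0" unfolding r_def using v
      by (metis carrier_vecD index_smult_vec(1) index_zero_vec(1))
    then have "v = 0\<^sub>v s" using Dpos v by (intro eq_vecI, auto)
    then show False using v by simp
  qed
  moreover have "Q *\<^sub>v r = 0\<^sub>v s" unfolding r_def using v Q
    by (simp add: mult_mat_vec, intro eq_vecI, auto)
  moreover have "\<forall>i<s. r $ i \<in> \<int>"
  proof (intro allI impI)
    fix i assume i: "i < s"
    have "r $ i = rat_of_int D * v $ i" unfolding r_def using v i by simp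
    then show "r $ i \<in> \<int>" unfolding D_def using clear_denom[of "{0..<s}" i "\<lambda>j. v $ j"] i by simp
  qed
  ultimately show ?thesis using r by blast
qed




lemma cr_rat: "complex_of_real (real_of_rat q) = complex_of_rat q"
proof -
  obtain a b where "quotient_of q = (a, b)" by force
  from quotient_of_div[OF this] show ?thesis by (simp add: of_rat_divide)
qed

context
  fixes s n :: nat and L A B :: "real mat" and C :: "int mat"
  assumes gen: "generic_cps s n L"
    and A: "A \<in> carrier_mat n n"
    and B: "B \<in> carrier_mat (s - n) (s - n)"
    and C: "C \<in> carrier_mat s s"
    and eqLC: "four_block_mat A (0\<^sub>m n (s - n)) (0\<^sub>m (s - n) n) B * L = L * map_mat real_of_int C"
begin

abbreviation "m \<equiv> s - n"
abbreviation "Ac \<equiv> map_mat complex_of_real A"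
abbreviation "Bc \<equiv> map_mat complex_of_real B"
abbreviation "Lc \<equiv> map_mat complex_of_real L"
abbreviation "Cc \<equiv> map_mat complex_of_real (map_mat real_of_int C)"
abbreviation "Mc \<equiv> four_block_mat Ac (0\<^sub>m n m) (0\<^sub>m m n) Bc"
abbreviation "Cq \<equiv> map_mat rat_of_int C"

lemma ns: "n < s" using gen unfolding generic_cps_def by auto
lemma sm: "n + m = s" using ns by simp
lemma L: "L \<in> carrier_mat s s" using gen unfolding generic_cps_def by auto
lemma detL: "det L \<noteq> 0" using gen unfolding generic_cps_def by auto
lemma injpar: "inj_on (pi_par n) (lattice_of s L)" using gen unfolding generic_cps_def by auto
lemma injperp: "inj_on (pi_perp s n) (lattice_of s L)" using gen unfolding generic_cps_def by auto

lemma Ac: "Ac \<in> carrier_mat n n" using A by simp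
lemma Bc: "Bc \<in> carrier_mat m m" using B by simp
lemma Lc: "Lc \<in> carrier_mat s s" using L by simp
lemma Cc: "Cc \<in> carrier_mat s s" using C by simp
lemma Mc: "Mc \<in> carrier_mat s s" using Ac Bc sm four_block_carrier_mat[OF Ac Bc] by simp
lemma Cq: "Cq \<in> carrier_mat s s" using C by simp

lemma Mc_map: "map_mat complex_of_real (four_block_mat A (0\<^sub>m n m) (0\<^sub>m m n) B) = Mc"
  by (rule eq_matI, insert A B, auto)

lemma intertw: "Mc * Lc = Lc * Cc"
proof -
  have FB: "four_block_mat A (0\<^sub>m n m) (0\<^sub>m m n) B \<in> carrier_mat s s"
    using four_block_carrier_mat[OF A B] sm by simp
  have CI: "map_mat real_of_int C \<in> carrier_mat s s" using C by simp
  have "map_mat complex_of_real (four_block_mat A (0\<^sub>m n m) (0\<^sub>m m n) B * L)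
      = map_mat complex_of_real (L * map_mat real_of_int C)" using eqLC by simp
  then show ?thesis
    unfolding of_real_hom.mat_hom_mult[OF FB L] of_real_hom.mat_hom_mult[OF L CI] Mc_map .
qed

lemma detLc: "det Lc \<noteq> 0" using detL by simp

lemma det_transfer: assumes "det (evm s P Mc) = 0" shows "det (evm s P Cc) = 0"
proof -
  have "det (evm s P Mc * Lc) = det (Lc * evm s P Cc)" using evm_intertwine[OF Mc Lc Cc intertw] by simp
  then have "det (evm s P Mc) * det Lc = det Lc * det (evm s P Cc)"
    using Mc Lc Cc by (simp add: det_mult[of _ s])
  then show ?thesis using assms detLc by simp
qed

lemma Cc_rat: "Cc = map_mat of_rat Cq"
  by (rule eq_matI, auto)

lemma Cc_int: "Cc = map_mat of_int C"
  by (rule eq_matI, auto)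

lemma zero_lattice: "0\<^sub>v s \<in> lattice_of s L"
  unfolding lattice_of_def
  by (rule CollectI, rule exI[of _ "0\<^sub>v s"], insert L, auto)

lemma key:
  fixes p :: "rat poly"
  assumes det: "det (evm s (map_poly of_rat p) Mc) = 0"
  shows "(\<exists>y1 \<in> carrier_vec n. y1 \<noteq> 0\<^sub>v n \<and> evm n (map_poly of_rat p) Ac *\<^sub>v y1 = 0\<^sub>v n) \<and>
         (\<exists>y2 \<in> carrier_vec m. y2 \<noteq> 0\<^sub>v m \<and> evm m (map_poly of_rat p) Bc *\<^sub>v y2 = 0\<^sub>v m)"
proof -
  let ?P = "map_poly (of_rat :: rat \<Rightarrow> complex) p"
  define Q where "Q = evm s p Cq"
  have Q: "Q \<in> carrier_mat s s" unfolding Q_def using Cq by simp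
  have PC: "evm s ?P Cc = map_mat of_rat Q"
    unfolding Q_def Cc_rat of_rat_hom.evm_hom[OF Cq] ..
  have "det (map_mat (of_rat :: rat \<Rightarrow> complex) Q) = 0" using det_transfer[OF det] PC by simp
  then have "det Q = 0" by simp
  from int_kernel[OF Q this] obtain r where r: "r \<in> carrier_vec s" "r \<noteq> 0\<^sub>v s" "Q *\<^sub>v r = 0\<^sub>v s"
    "\<forall>i<s. r $ i \<in> \<int>" by blast
  define rr where "rr = map_vec real_of_rat r"
  have rr: "rr \<in> carrier_vec s" unfolding rr_def using r by simp
  have rrint: "\<forall>i<s. rr $ i \<in> \<int>"
  proof (intro allI impI)
    fix i assume i: "i < s"
    from r(4) i obtain k where "r $ i = of_int k" by (meson Ints_cases)
    then show "rr $ i \<in> \<int>" unfolding rr_def using r i by simp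
  qed
  have rrnz: "rr \<noteq> 0\<^sub>v s"
  proof
    assume "rr = 0\<^sub>v s"
    then have "\<forall>i<s. r $ i = 0" unfolding rr_def using r
      by (metis carrier_vecD index_map_vec(1) index_zero_vec(1) of_rat_eq_0_iff)
    then have "r = 0\<^sub>v s" using r by (intro eq_vecI, auto)
    then show False using r by simp
  qed
  define y where "y = L *\<^sub>v rr"
  have y: "y \<in> carrier_vec s" unfolding y_def using L rr by simp
  have ylat: "y \<in> lattice_of s L" unfolding lattice_of_def y_def using rr rrint by blast
  have ynz: "y \<noteq> 0\<^sub>v s"
  proof
    assume "y = 0\<^sub>v s"
    then have "det L = 0" using det_0_iff_vec_prod_zero[OF L] rr rrnz unfolding y_def by blast
    then show False using detL by simp
  qed
  define yc where "yc = map_vec complex_of_real y"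
  have yc: "yc \<in> carrier_vec (n + m)" unfolding yc_def using y sm by simp
  have x: "map_vec complex_of_real rr = map_vec of_rat r"
    unfolding rr_def by (rule eq_vecI, auto simp: cr_rat)
  have ycL: "yc = Lc *\<^sub>v map_vec of_rat r"
    unfolding yc_def y_def of_real_hom.mult_mat_vec_hom[OF L rr] x ..
  have mr: "map_vec (of_rat :: rat \<Rightarrow> complex) r \<in> carrier_vec s" using r by simp
  have "evm s ?P Mc *\<^sub>v yc = (evm s ?P Mc * Lc) *\<^sub>v map_vec of_rat r"
    unfolding ycL using Mc Lc mr by (simp add: assoc_mult_mat_vec[of _ s s _ s])
  also have "\<dots> = (Lc * evm s ?P Cc) *\<^sub>v map_vec of_rat r"
    using evm_intertwine[OF Mc Lc Cc intertw] by simp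
  also have "\<dots> = Lc *\<^sub>v (evm s ?P Cc *\<^sub>v map_vec of_rat r)"
    using Lc Cc mr by (simp add: assoc_mult_mat_vec[of _ s s _ s])
  also have "evm s ?P Cc *\<^sub>v map_vec of_rat r = map_vec of_rat (Q *\<^sub>v r)"
    unfolding PC of_rat_hom.mult_mat_vec_hom[OF Q r(1)] ..
  also have "\<dots> = 0\<^sub>v s" using r by simp
  also have "Lc *\<^sub>v 0\<^sub>v s = 0\<^sub>v s" using Lc by (intro eq_vecI, auto)
  finally have ev0: "evm s ?P Mc *\<^sub>v yc = 0\<^sub>v s" .
  define y1 where "y1 = vec_first yc n"
  define y2 where "y2 = vec_last yc m"
  have y1: "y1 \<in> carrier_vec n" and y2: "y2 \<in> carrier_vec m" unfolding y1_def y2_def by auto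
  have ysplit: "yc = y1 @\<^sub>v y2" unfolding y1_def y2_def using yc by simp
  have blk: "evm s ?P Mc = four_block_mat (evm n ?P Ac) (0\<^sub>m n m) (0\<^sub>m m n) (evm m ?P Bc)"
    using evm_block[OF Ac Bc, of ?P] sm by simp
  have E1: "evm n ?P Ac \<in> carrier_mat n n" and E2: "evm m ?P Bc \<in> carrier_mat m m"
    using Ac Bc by auto
  have "evm s ?P Mc *\<^sub>v yc = (evm n ?P Ac *\<^sub>v y1) @\<^sub>v (evm m ?P Bc *\<^sub>v y2)"
  proof -
    have z1: "0\<^sub>m n m *\<^sub>v y2 = (0\<^sub>v n :: complex vec)" using y2 by (intro eq_vecI, auto)
    have z2: "0\<^sub>m m n *\<^sub>v y1 = (0\<^sub>v m :: complex vec)" using y1 by (intro eq_vecI, auto)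
    have c1: "evm n ?P Ac *\<^sub>v y1 \<in> carrier_vec n" using E1 y1 by simp
    have c2: "evm m ?P Bc *\<^sub>v y2 \<in> carrier_vec m" using E2 y2 by simp
    show ?thesis
      unfolding blk ysplit four_block_mat_mult_vec[OF E1 zero_carrier_mat zero_carrier_mat E2 y1 y2] z1 z2
      using c1 c2 by simp
  qed
  moreover have "0\<^sub>v s = (0\<^sub>v n @\<^sub>v 0\<^sub>v m :: complex vec)" using sm by (intro eq_vecI, auto)
  ultimately have "(evm n ?P Ac *\<^sub>v y1) @\<^sub>v (evm m ?P Bc *\<^sub>v y2) = 0\<^sub>v n @\<^sub>v 0\<^sub>v m"
    using ev0 by simp
  then have ev1: "evm n ?P Ac *\<^sub>v y1 = 0\<^sub>v n" and ev2: "evm m ?P Bc *\<^sub>v y2 = 0\<^sub>v m"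
    using append_vec_eq[of "evm n ?P Ac *\<^sub>v y1" n "0\<^sub>v n"] E1 y1 by auto
  have y1i: "\<And>i. i < n \<Longrightarrow> y1 $ i = complex_of_real (y $ i)"
    unfolding y1_def yc_def vec_first_def using y ns by simp
  have y2i: "\<And>i. i < m \<Longrightarrow> y2 $ i = complex_of_real (y $ (n + i))"
    unfolding y2_def yc_def vec_last_def using y ns by simp
  have L0: "L *\<^sub>v 0\<^sub>v s = 0\<^sub>v s" using L by (intro eq_vecI, auto)
  have y1nz: "y1 \<noteq> 0\<^sub>v n"
  proof
    assume "y1 = 0\<^sub>v n"
    then have "\<forall>i<n. y $ i = 0" using y1i by (metis index_zero_vec(1) of_real_eq_0_iff)
    then have "pi_par n y = pi_par n (0\<^sub>v s)" unfolding pi_par_def using ns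
      by (intro eq_vecI, auto)
    then have "y = 0\<^sub>v s" using injpar ylat zero_lattice by (meson inj_onD)
    then show False using ynz by simp
  qed
  have y2nz: "y2 \<noteq> 0\<^sub>v m"
  proof
    assume "y2 = 0\<^sub>v m"
    then have "\<forall>i<m. y $ (n + i) = 0" using y2i by (metis index_zero_vec(1) of_real_eq_0_iff)
    then have "pi_perp s n y = pi_perp s n (0\<^sub>v s)" unfolding pi_perp_def using ns
      by (intro eq_vecI, auto)
    then have "y = 0\<^sub>v s" using injperp ylat zero_lattice by (meson inj_onD)
    then show False using ynz by simp
  qed
  show ?thesis using y1 y2 y1nz y2nz ev1 ev2 by blast
qed


lemma eig_det: assumes w: "w \<in> carrier_vec s" "w \<noteq> 0\<^sub>v s" and ev: "Mc *\<^sub>v w = z \<cdot>\<^sub>v w"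
  and root: "poly P z = 0"
  shows "det (evm s P Mc) = 0"
proof -
  have "evm s P Mc *\<^sub>v w = poly P z \<cdot>\<^sub>v w" by (rule evm_eigen[OF Mc w(1) ev])
  also have "\<dots> = 0\<^sub>v s" using root w by (intro eq_vecI, auto)
  finally show ?thesis using det_0_iff_vec_prod_zero[of "evm s P Mc" s] Mc w by auto
qed

lemma eig_alg: assumes w: "w \<in> carrier_vec s" "w \<noteq> 0\<^sub>v s" and ev: "Mc *\<^sub>v w = z \<cdot>\<^sub>v w"
  shows "algebraic z \<and> (\<exists>q::rat poly. q \<noteq> 0 \<and> poly (map_poly of_rat q) z = 0)"
proof -
  have "det (evm s [:- z, 1:] Mc) = 0" by (rule eig_det[OF w ev], simp)
  then have "det (evm s [:- z, 1:] Cc) = 0" by (rule det_transfer)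
  then have "det (char_matrix Cc z) = 0" unfolding evm_lin[OF Cc] char_matrix_def using Cc by simp
  then have "eigenvalue Cc z" using eigenvalue_det[OF Cc] by simp
  then have r: "poly (char_poly Cc) z = 0" using eigenvalue_root_char_poly[OF Cc] by simp
  have cp: "char_poly Cc = of_int_poly (char_poly C)"
    unfolding Cc_int by (rule of_int_hom.char_poly_hom[OF C])
  have c1: "coeff (char_poly C) s = 1" using degree_monic_char_poly[OF C] by simp
  have alg: "algebraic z" unfolding algebraic_def
  proof (intro exI conjI allI)
    show "coeff (of_int_poly (char_poly C)) i \<in> \<int>" for i by simp
    show "(of_int_poly (char_poly C) :: complex poly) \<noteq> 0"
    proof
      assume "(of_int_poly (char_poly C) :: complex poly) = 0"
      then have "coeff (of_int_poly (char_poly C) :: complex poly) s = 0" by simp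
      then show False using c1 by simp
    qed
    show "poly (of_int_poly (char_poly C)) z = 0" using r cp by simp
  qed
  let ?q = "map_poly rat_of_int (char_poly C)"
  have qq: "map_poly (of_rat :: rat \<Rightarrow> complex) ?q = of_int_poly (char_poly C)"
    by (simp add: map_poly_map_poly o_def)
  have "?q \<noteq> 0"
  proof
    assume "?q = 0"
    then have "coeff ?q s = 0" by simp
    then show False using c1 by simp
  qed
  moreover have "poly (map_poly of_rat ?q) z = 0" unfolding qq using r cp by simp
  ultimately show ?thesis using alg by blast
qed

lemma embedA: assumes "eigenvalue Ac z"
  shows "\<exists>w. w \<in> carrier_vec s \<and> w \<noteq> 0\<^sub>v s \<and> Mc *\<^sub>v w = z \<cdot>\<^sub>v w"
proof -
  obtain v where v: "v \<in> carrier_vec n" "v \<noteq> 0\<^sub>v n" "Ac *\<^sub>v v = z \<cdot>\<^sub>v v"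
    using assms Ac unfolding eigenvalue_def eigenvector_def by auto
  define w where "w = v @\<^sub>v 0\<^sub>v m"
  have w: "w \<in> carrier_vec s" unfolding w_def
    using append_carrier_vec[OF v(1) zero_carrier_vec[of m]] sm by metis
  have "w \<noteq> 0\<^sub>v s"
  proof
    assume "w = 0\<^sub>v s"
    then have "\<forall>i<n. v $ i = 0" unfolding w_def using v ns
      by (metis carrier_vecD index_append_vec(1) index_zero_vec(1) less_imp_le_nat order_less_le_trans sm trans_less_add1)
    then have "v = 0\<^sub>v n" using v by (intro eq_vecI, auto)
    then show False using v by simp
  qed
  moreover have "Mc *\<^sub>v w = z \<cdot>\<^sub>v w"
  proof -
    have z1: "0\<^sub>m n m *\<^sub>v 0\<^sub>v m = (0\<^sub>v n :: complex vec)" by (intro eq_vecI, auto)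
    have z2: "0\<^sub>m m n *\<^sub>v v = (0\<^sub>v m :: complex vec)" using v by (intro eq_vecI, auto)
    have z3: "Bc *\<^sub>v 0\<^sub>v m = 0\<^sub>v m" using Bc by (intro eq_vecI, auto)
    have "Mc *\<^sub>v w = (z \<cdot>\<^sub>v v) @\<^sub>v 0\<^sub>v m"
      unfolding w_def four_block_mat_mult_vec[OF Ac zero_carrier_mat zero_carrier_mat Bc v(1) zero_carrier_vec] z1 z2 z3
      using v Ac by simp
    also have "\<dots> = z \<cdot>\<^sub>v w" unfolding w_def using v by (intro eq_vecI, auto)
    finally show ?thesis .
  qed
  ultimately show ?thesis using w by blast
qed

lemma embedB: assumes "eigenvalue Bc z"
  shows "\<exists>w. w \<in> carrier_vec s \<and> w \<noteq> 0\<^sub>v s \<and> Mc *\<^sub>v w = z \<cdot>\<^sub>v w"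
proof -
  obtain v where v: "v \<in> carrier_vec m" "v \<noteq> 0\<^sub>v m" "Bc *\<^sub>v v = z \<cdot>\<^sub>v v"
    using assms Bc unfolding eigenvalue_def eigenvector_def by auto
  define w where "w = 0\<^sub>v n @\<^sub>v v"
  have w: "w \<in> carrier_vec s" unfolding w_def
    using append_carrier_vec[OF zero_carrier_vec[of n] v(1)] sm by metis
  have "w \<noteq> 0\<^sub>v s"
  proof
    assume w0: "w = 0\<^sub>v s"
    have "\<forall>i<m. v $ i = 0"
    proof (intro allI impI)
      fix i assume i: "i < m"
      have "w $ (n + i) = 0" using w0 i sm by simp
      then show "v $ i = 0" unfolding w_def using v i by simp
    qed
    then have "v = 0\<^sub>v m" using v by (intro eq_vecI, auto)
    then show False using v by simp
  qed
  moreover have "Mc *\<^sub>v w = z \<cdot>\<^sub>v w"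
  proof -
    have z1: "0\<^sub>m n m *\<^sub>v v = (0\<^sub>v n :: complex vec)" using v by (intro eq_vecI, auto)
    have z2: "0\<^sub>m m n *\<^sub>v 0\<^sub>v n = (0\<^sub>v m :: complex vec)" by (intro eq_vecI, auto)
    have z3: "Ac *\<^sub>v 0\<^sub>v n = 0\<^sub>v n" using Ac by (intro eq_vecI, auto)
    have "Mc *\<^sub>v w = 0\<^sub>v n @\<^sub>v (z \<cdot>\<^sub>v v)"
      unfolding w_def four_block_mat_mult_vec[OF Ac zero_carrier_mat zero_carrier_mat Bc zero_carrier_vec v(1)] z1 z2 z3
      using v Bc by simp
    also have "\<dots> = z \<cdot>\<^sub>v w" unfolding w_def using v by (intro eq_vecI, auto)
    finally show ?thesis .
  qed
  ultimately show ?thesis using w by blast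
qed

lemma conj_both: assumes w: "w \<in> carrier_vec s" "w \<noteq> 0\<^sub>v s" and ev: "Mc *\<^sub>v w = z \<cdot>\<^sub>v w"
  shows "(\<exists>\<mu>. eigenvalue Bc \<mu> \<and> alg_conjugate z \<mu>) \<and> (\<exists>la. eigenvalue Ac la \<and> alg_conjugate z la)"
proof -
  from eig_alg[OF w ev] have algz: "algebraic z" and ex: "\<exists>q::rat poly. q \<noteq> 0 \<and> poly (map_poly of_rat q) z = 0"
    by auto
  from mp_exists[OF ex] obtain p where mp: "mp_prop z p" by blast
  have mpz: "min_poly_Q z = p" by (rule min_poly_eq[OF mp])
  have pnz: "p \<noteq> 0" and root: "poly (map_poly of_rat p) z = 0" using mp unfolding mp_prop_def by auto
  have Pnz: "map_poly (of_rat :: rat \<Rightarrow> complex) p \<noteq> 0" using pnz by simp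
  have "det (evm s (map_poly of_rat p) Mc) = 0" by (rule eig_det[OF w ev root])
  from key[OF this] obtain y1 y2 where
    y1: "y1 \<in> carrier_vec n" "y1 \<noteq> 0\<^sub>v n" "evm n (map_poly of_rat p) Ac *\<^sub>v y1 = 0\<^sub>v n" and
    y2: "y2 \<in> carrier_vec m" "y2 \<noteq> 0\<^sub>v m" "evm m (map_poly of_rat p) Bc *\<^sub>v y2 = 0\<^sub>v m" by blast
  have conj: "alg_conjugate z u" if u: "poly (map_poly of_rat p) u = 0"
    and w': "w' \<in> carrier_vec s" "w' \<noteq> 0\<^sub>v s" "Mc *\<^sub>v w' = u \<cdot>\<^sub>v w'" for u w'
  proof -
    from eig_alg[OF w'] have algu: "algebraic u" and exu: "\<exists>q::rat poly. q \<noteq> 0 \<and> poly (map_poly of_rat q) u = 0"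
      by auto
    from mp_exists[OF exu] obtain p' where mp': "mp_prop u p'" by blast
    have "p' = p" by (rule mp_conj[OF mp mp' u])
    then have "min_poly_Q u = p" using min_poly_eq[OF mp'] by simp
    then show ?thesis unfolding alg_conjugate_def using algz algu mpz by simp
  qed
  from roots_eigen[OF Bc Pnz y2] obtain mu where mu: "poly (map_poly of_rat p) mu = 0" "eigenvalue Bc mu"
    by blast
  from embedB[OF mu(2)] obtain w' where "w' \<in> carrier_vec s" "w' \<noteq> 0\<^sub>v s" "Mc *\<^sub>v w' = mu \<cdot>\<^sub>v w'" by blast
  with conj[OF mu(1)] mu(2) have P1: "\<exists>\<mu>. eigenvalue Bc \<mu> \<and> alg_conjugate z \<mu>" by blast
  from roots_eigen[OF Ac Pnz y1] obtain la where la: "poly (map_poly of_rat p) la = 0" "eigenvalue Ac la"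
    by blast
  from embedA[OF la(2)] obtain w'' where "w'' \<in> carrier_vec s" "w'' \<noteq> 0\<^sub>v s" "Mc *\<^sub>v w'' = la \<cdot>\<^sub>v w''" by blast
  with conj[OF la(1)] la(2) have P2: "\<exists>la. eigenvalue Ac la \<and> alg_conjugate z la" by blast
  show ?thesis using P1 P2 by blast
qed

lemma final_ctx:
  "(\<forall>la. eigenvalue Ac la \<longrightarrow> (\<exists>\<mu>. eigenvalue Bc \<mu> \<and> alg_conjugate la \<mu>)) \<and>
   (\<forall>\<mu>. eigenvalue Bc \<mu> \<longrightarrow> (\<exists>la. eigenvalue Ac la \<and> alg_conjugate \<mu> la))"
proof (intro conjI allI impI)
  fix la assume "eigenvalue Ac la"
  from embedA[OF this] obtain w where "w \<in> carrier_vec s" "w \<noteq> 0\<^sub>v s" "Mc *\<^sub>v w = la \<cdot>\<^sub>v w" by blast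
  from conj_both[OF this] show "\<exists>\<mu>. eigenvalue Bc \<mu> \<and> alg_conjugate la \<mu>" by blast
next
  fix mu assume "eigenvalue Bc mu"
  from embedB[OF this] obtain w where "w \<in> carrier_vec s" "w \<noteq> 0\<^sub>v s" "Mc *\<^sub>v w = mu \<cdot>\<^sub>v w" by blast
  from conj_both[OF this] show "\<exists>la. eigenvalue Ac la \<and> alg_conjugate mu la" by blast
qed

end

theorem corollary2:
  fixes s n :: nat and L A B :: "real mat" and C :: "int mat"
  assumes "generic_cps s n L"
    and "self_similarity s n L A"
    and "B \<in> carrier_mat (s - n) (s - n)"
    and "C \<in> carrier_mat s s"
    and "four_block_mat A (0\<^sub>m n (s - n)) (0\<^sub>m (s - n) n) B * L = L * map_mat real_of_int C"
  shows "(\<forall>la. eigenvalue (map_mat complex_of_real A) la \<longrightarrow>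
            (\<exists>\<mu>. eigenvalue (map_mat complex_of_real B) \<mu> \<and> alg_conjugate la \<mu>)) \<and>
         (\<forall>\<mu>. eigenvalue (map_mat complex_of_real B) \<mu> \<longrightarrow>
            (\<exists>la. eigenvalue (map_mat complex_of_real A) la \<and> alg_conjugate \<mu> la))"
proof -
  have A: "A \<in> carrier_mat n n" using assms(2) unfolding self_similarity_def by auto
  show ?thesis by (rule final_ctx[OF assms(1) A assms(3) assms(4) assms(5)])
qed


end
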